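(* Let $n$ be even, $1\le\eta\le n/2$, and $p\ge1$ an integer. On the fermionic Fock space on $n$ spin orbitals define $$\widetilde{T}=nN_0,\qquad \widetilde{V}=\frac{1}{n^2}\sum_{j,k,l,m=0}^{n-1}\Big(\sum_{x=0}^{\frac n2-1}e^{\frac{2\pi i x(k-j)}{n}}\Big)\Big(\sum_{y=0}^{\frac n2-1}e^{\frac{2\pi i y(m-l)}{n}}\Big)A_j^\dagger A_kA_l^\dagger A_m,$$ and the $\eta$-electron states $$|\widetilde\psi_\eta\rangle=\tfrac{1}{\sqrt2}\big(|0,1,0,\dots,0,\underbrace{1,\dots,1}_{\eta-1}\rangle+|1,0,0,\dots,0,\underbrace{1,\dots,1}_{\eta-1}\rangle\big),\quad |\widetilde\phi_\eta\rangle=\tfrac{1}{\sqrt2}\big(|0,1,0,\dots,0,\underbrace{1,\dots,1}_{\eta-1}\rangle+i|1,0,0,\dots,0,\underbrace{1,\dots,1}_{\eta-1}\rangle\big),$$ where the last $\eta-1$ modes are occupied. Writing $C_p=[\widetilde T,\ldots[\widetilde T,\widetilde V]]$ with $p$ copies of $\widetilde T$, we have $$|\langle\widetilde\psi_\eta|C_p|\widetilde\psi_\eta\rangle|\ (p\text{ odd}),\qquad |\langle\widetilde\phi_\eta|C_p|\widetilde\phi_\eta\rangle|\ (p\text{ even})\quad=\frac{n^p\eta}{\pi}+O(n^p),$$ with the implied constant depending only on $p$.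
   Context: Fermionic Fock space on $n$ spin orbitals: the $2^n$-dimensional Hilbert space with orthonormal basis $|c_0,c_1,\dots,c_{n-1}\rangle$, $c_j\in\{0,1\}$. Creation operators: $A_j^\dagger|\dots,0_j,\dots\rangle=(-1)^{\sum_{k<j}c_k}|\dots,1_j,\dots\rangle$, $A_j^\dagger|\dots,1_j,\dots\rangle=0$; annihilation operators $A_j=(A_j^\dagger)^\dagger$; $N_j=A_j^\dagger A_j$. An $\eta$-electron state is a unit vector in the span of basis vectors with $\sum_jc_j=\eta$. *)

theory Defs
  imports Complex_Main
begin

text \<open>A basis vector |c_0,...,c_{n-1}> is
  identified with the set of occupied orbitals S, a subset of {..<n}. A state is a
  function from such sets to complex amplitudes (only values on Pow {..<n} matter).\<close>

type_synonym fstate = "nat set \<Rightarrow> complex"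
type_synonym fop = "fstate \<Rightarrow> fstate"

definition fbasis :: "nat set \<Rightarrow> fstate" where
  "fbasis S = (\<lambda>S'. if S' = S then 1 else 0)"

definition finner :: "nat \<Rightarrow> fstate \<Rightarrow> fstate \<Rightarrow> complex" where
  "finner n \<phi> \<psi> = (\<Sum>S\<in>Pow {..<n}. cnj (\<phi> S) * \<psi> S)"

definition adag :: "nat \<Rightarrow> fop" where
  "adag j \<psi> = (\<lambda>S. if j \<in> S then (-1) ^ card {k\<in>S. k < j} * \<psi> (S - {j}) else 0)"

definition fadj :: "nat \<Rightarrow> fop \<Rightarrow> fop" where
  "fadj n T \<psi> = (\<lambda>S. \<Sum>S'\<in>Pow {..<n}. cnj (T (fbasis S) S') * \<psi> S')"

definition ann :: "nat \<Rightarrow> nat \<Rightarrow> fop" where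
  "ann n j = fadj n (adag j)"

definition numop :: "nat \<Rightarrow> nat \<Rightarrow> fop" where
  "numop n j \<psi> = adag j (ann n j \<psi>)"

definition comm :: "fop \<Rightarrow> fop \<Rightarrow> fop" where
  "comm T V \<psi> = (\<lambda>S. T (V \<psi>) S - V (T \<psi>) S)"

definition Ttil :: "nat \<Rightarrow> fop" where
  "Ttil n \<psi> = (\<lambda>S. of_nat n * numop n 0 \<psi> S)"

definition phase_sum :: "nat \<Rightarrow> nat \<Rightarrow> nat \<Rightarrow> complex" where
  "phase_sum n a b = (\<Sum>x<n div 2. exp (2 * complex_of_real pi * \<i> * of_nat x
        * of_int (int b - int a) / of_nat n))"

definition Vtil :: "nat \<Rightarrow> fop" where
  "Vtil n \<psi> = (\<lambda>S. (1 / (of_nat n)^2) *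
     (\<Sum>j<n. \<Sum>k<n. \<Sum>l<n. \<Sum>m<n.
        phase_sum n j k * phase_sum n l m * adag j (ann n k (adag l (ann n m \<psi>))) S))"

definition Cp :: "nat \<Rightarrow> nat \<Rightarrow> fop" where
  "Cp n p = ((comm (Ttil n)) ^^ p) (Vtil n)"

definition cfgA :: "nat \<Rightarrow> nat \<Rightarrow> nat set" where
  "cfgA n \<eta> = {1} \<union> {n + 1 - \<eta>..<n}"

definition cfgB :: "nat \<Rightarrow> nat \<Rightarrow> nat set" where
  "cfgB n \<eta> = {0} \<union> {n + 1 - \<eta>..<n}"

definition psi_til :: "nat \<Rightarrow> nat \<Rightarrow> fstate" where
  "psi_til n \<eta> = (\<lambda>S. (1 / sqrt 2) * (fbasis (cfgA n \<eta>) S + fbasis (cfgB n \<eta>) S))"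

definition phi_til :: "nat \<Rightarrow> nat \<Rightarrow> fstate" where
  "phi_til n \<eta> = (\<lambda>S. (1 / sqrt 2) * (fbasis (cfgA n \<eta>) S + \<i> * fbasis (cfgB n \<eta>) S))"

end

theory Submission imports Defs "HOL-Analysis.Complex_Transcendental" begin


definition sg :: "nat set \<Rightarrow> nat \<Rightarrow> complex" where
  "sg X q = (-1) ^ card {i\<in>X. i < q}"

definition ca :: "nat \<Rightarrow> nat set \<Rightarrow> complex" where
  "ca j S = (if j \<in> S then sg S j else 0)"

definition cb :: "nat \<Rightarrow> nat \<Rightarrow> nat set \<Rightarrow> complex" where
  "cb n k S = (if k \<notin> S \<and> insert k S \<subseteq> {..<n} then sg S k else 0)"

lemma adag_eq: "adag j \<phi> S = ca j S * \<phi> (S - {j})"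
  by (simp add: adag_def ca_def sg_def)

lemma sg_insert_same: "sg (insert k S) k = sg S k"
  unfolding sg_def by (rule arg_cong[where f="\<lambda>c. (-1::complex)^card c"]) auto

lemma sg_remove_same: "sg (S - {k}) k = sg S k"
  unfolding sg_def by (rule arg_cong[where f="\<lambda>c. (-1::complex)^card c"]) auto

lemma sg_sq: "sg S k * sg S k = 1"
  unfolding sg_def by (simp flip: power_add)

lemma ann_eq: "ann n k \<phi> S = cb n k S * \<phi> (insert k S)"
proof -
  have "ann n k \<phi> S = (\<Sum>S'\<in>Pow {..<n}. cnj (adag k (fbasis S) S') * \<phi> S')"
    by (simp add: ann_def fadj_def)
  also have "\<dots> = (\<Sum>S'\<in>Pow {..<n}. if S' = insert k S then (if k \<notin> S then sg S k * \<phi> S' else 0) else 0)"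
  proof (rule sum.cong)
    fix S' assume "S' \<in> Pow {..<n}"
    show "cnj (adag k (fbasis S) S') * \<phi> S' = (if S' = insert k S then (if k \<notin> S then sg S k * \<phi> S' else 0) else 0)"
    proof (cases "k \<in> S' \<and> S' - {k} = S")
      case True
      then have "S' = insert k S" "k \<notin> S" by auto
      moreover have "{i\<in>insert k S. i < k} = {i\<in>S. i < k}" by auto
      ultimately show ?thesis using True
        by (simp add: adag_def fbasis_def sg_def)
    next
      case False
      then show ?thesis by (auto simp: adag_def fbasis_def)
    qed
  qed simp
  also have "\<dots> = cb n k S * \<phi> (insert k S)"
    by (simp add: sum.delta cb_def)
  finally show ?thesis .
qed

lemma T_eq: "Ttil n \<psi> S = (of_nat n * (if 0 \<in> S \<and> S \<subseteq> {..<n} then 1 else 0)) * \<psi> S"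
proof -
  have "S - {0} \<subseteq> {..<n} \<and> 0 < n \<longleftrightarrow> S \<subseteq> {..<n}" if "0 \<in> S" using that by auto
  then show ?thesis
    by (auto simp: Ttil_def numop_def adag_eq ann_eq ca_def cb_def sg_def insert_absorb)
qed

definition tt :: "nat \<Rightarrow> nat set \<Rightarrow> complex" where
  "tt n S = of_nat n * (if 0 \<in> S \<and> S \<subseteq> {..<n} then 1 else 0)"

definition Gf :: "nat \<times> nat \<times> nat \<times> nat \<Rightarrow> nat set \<Rightarrow> nat set" where
  "Gf i S = (case i of (j,k,l,m) \<Rightarrow> insert m (insert k (S - {j}) - {l}))"

definition cf :: "nat \<Rightarrow> nat \<times> nat \<times> nat \<times> nat \<Rightarrow> nat set \<Rightarrow> complex" where
  "cf n i S = (case i of (j,k,l,m) \<Rightarrow>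
     ca j S * cb n k (S - {j}) * ca l (insert k (S - {j})) * cb n m (insert k (S - {j}) - {l}))"

definition Kf :: "nat \<Rightarrow> nat \<times> nat \<times> nat \<times> nat \<Rightarrow> nat set \<Rightarrow> complex" where
  "Kf n i S = (case i of (j,k,l,m) \<Rightarrow>
     1 / (of_nat n)^2 * (phase_sum n j k * phase_sum n l m) * cf n i S)"

definition I4 :: "nat \<Rightarrow> (nat \<times> nat \<times> nat \<times> nat) set" where
  "I4 n = {..<n} \<times> {..<n} \<times> {..<n} \<times> {..<n}"

lemma term_eq: "adag j (ann n k (adag l (ann n m \<psi>))) S = cf n (j,k,l,m) S * \<psi> (Gf (j,k,l,m) S)"
  by (simp add: adag_eq ann_eq cf_def Gf_def)

lemma Vtil_eq: "Vtil n \<psi> S = (\<Sum>i\<in>I4 n. Kf n i S * \<psi> (Gf i S))"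
proof -
  have "Vtil n \<psi> S = (\<Sum>j<n. \<Sum>k<n. \<Sum>l<n. \<Sum>m<n. Kf n (j,k,l,m) S * \<psi> (Gf (j,k,l,m) S))"
    by (simp add: Vtil_def term_eq sum_distrib_left Kf_def mult.assoc)
  also have "\<dots> = (\<Sum>i\<in>I4 n. Kf n i S * \<psi> (Gf i S))"
    by (simp add: I4_def sum.cartesian_product split_def)
  finally show ?thesis .
qed

lemma comm_T: "comm (Ttil n) (\<lambda>\<psi> S. \<Sum>i\<in>I. c i S * \<psi> (g i S)) =
   (\<lambda>\<psi> S. \<Sum>i\<in>I. (c i S * (tt n S - tt n (g i S))) * \<psi> (g i S))"
  by (auto simp: comm_def T_eq tt_def[symmetric] sum_distrib_left sum_subtractf[symmetric] algebra_simps intro!: ext sum.cong)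

lemma Cp_eq: "Cp n p = (\<lambda>\<psi> S. \<Sum>i\<in>I4 n. (Kf n i S * (tt n S - tt n (Gf i S))^p) * \<psi> (Gf i S))"
proof (induction p)
  case 0
  then show ?case by (simp add: Cp_def Vtil_eq[abs_def])
next
  case (Suc p)
  have "Cp n (Suc p) = comm (Ttil n) (Cp n p)" by (simp add: Cp_def)
  also have "\<dots> = (\<lambda>\<psi> S. \<Sum>i\<in>I4 n. (Kf n i S * (tt n S - tt n (Gf i S))^p * (tt n S - tt n (Gf i S))) * \<psi> (Gf i S))"
    unfolding Suc by (rule comm_T)
  finally show ?case by (simp add: power_Suc2 mult_ac)
qed



lemma cases_lemma:
  assumes ab: "a \<noteq> b" "a \<notin> R" "b \<notin> R"
    and j: "j \<in> insert a R" and k: "k \<notin> insert a R - {j}"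
    and l: "l \<in> insert k (insert a R - {j})"
    and m: "m \<notin> insert k (insert a R - {j}) - {l}"
    and g: "insert m (insert k (insert a R - {j}) - {l}) = insert b R"
  shows "(j = a \<and> k = b \<and> l \<in> insert b R \<and> m = l) \<or> (j \<in> insert a R \<and> k = j \<and> l = a \<and> m = b)
     \<or> (j = a \<and> l = k \<and> m = b \<and> k \<notin> insert a (insert b R)) \<or> (j \<in> R \<and> k = b \<and> l = a \<and> m = j)"
proof (cases "j = a")
  case True
  then have SR: "insert a R - {j} = R" using ab by auto
  show ?thesis
  proof (cases "l = k")
    case True
    with SR k have S2: "insert k (insert a R - {j}) - {l} = R" by auto
    with g m have "m = b" using ab by auto
    then show ?thesis using True \<open>j = a\<close> SR k by auto
  next
    case False
    with l SR have lR: "l \<in> R" by auto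
    have "l \<in> insert b R" using lR by auto
    then have "m = l" using g False by auto
    moreover have "k \<in> insert b R" using g False lR by blast
    ultimately show ?thesis using \<open>j = a\<close> SR k lR by auto
  qed
next
  case False
  with j have jR: "j \<in> R" by auto
  have "a \<in> insert k (insert a R - {j})" using False by auto
  have la: "l = a"
  proof (rule ccontr)
    assume "l \<noteq> a"
    then have "a \<in> insert b R" using g False by blast
    then show False using ab by auto
  qed
  have ka: "k \<noteq> a" using k False by auto
  have S2: "insert k (insert a R - {j}) - {l} = insert k (R - {j})" using la ka ab by auto
  have "j \<in> insert b R" using jR by auto
  then have "j = m \<or> j = k" using g S2 by auto
  then show ?thesis
  proof
    assume "j = k"
    then have "insert m R = insert b R" using g S2 jR by (auto simp: insert_absorb)
    moreover have "m \<notin> R" using m S2 \<open>j = k\<close> jR by auto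
    ultimately have "m = b" by auto
    then show ?thesis using \<open>j = k\<close> la jR by auto
  next
    assume "j = m"
    show ?thesis
    proof (cases "k = j")
      case True
      then show ?thesis using \<open>j = m\<close> m S2 by auto
    next
      case False
      have "k \<notin> R" using k False ka by auto
      moreover have "k \<in> insert b R" using g S2 by blast
      ultimately show ?thesis using \<open>j = m\<close> la jR by auto
    qed
  qed
qed

lemma sg_sq2: "sg S k * (sg S k * r) = r"
  by (simp add: mult.assoc[symmetric] sg_sq)

lemma phase_diag: "phase_sum n x x = of_nat (n div 2)"
  by (simp add: phase_sum_def)

lemma sg_low: "\<forall>r\<in>X. q \<le> r \<Longrightarrow> sg X q = 1"
proof -
  assume "\<forall>r\<in>X. q \<le> r"
  then have e: "{i\<in>X. i < q} = {}" by auto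
  show ?thesis unfolding sg_def e by simp
qed

lemma M_eq:
  assumes ab: "a \<noteq> b" "a \<notin> R" "b \<notin> R" "a < n" "b < n" "R \<subseteq> {..<n}" "finite R"
    and lt: "\<forall>r\<in>R. a < r \<and> b < r"
    and zero: "\<forall>k<n. k \<notin> {a,b} \<longrightarrow> phase_sum n a k * phase_sum n k b = 0"
    and ev: "even n"
  shows "(\<Sum>i\<in>I4 n. if Gf i (insert a R) = insert b R then Kf n i (insert a R) else 0)
     = of_nat (card R + 1) * phase_sum n a b / of_nat n"
proof -
  define S where "S = insert a R"
  define T where "T = insert b R"
  define F1 where "F1 = (\<lambda>l::nat. (a,b,l,l))"
  define F2 where "F2 = (\<lambda>j::nat. (j,j,a,b))"
  define h where "h = (\<lambda>i. if Gf i S = T then Kf n i S else 0)"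
  define c where "c = 1 / (of_nat n)^2 * phase_sum n a b * of_nat (n div 2)"
  have fin: "finite (I4 n)" by (simp add: I4_def)
  have s1: "sg (insert a R) a = 1" using lt by (intro sg_low) auto
  have s2: "sg R b = 1" using lt by (intro sg_low) auto
  have sub: "F1 ` T \<union> F2 ` S \<subseteq> I4 n" using ab by (auto simp: F1_def F2_def T_def S_def I4_def)
  have z: "h i = 0" if "i \<in> I4 n - (F1 ` T \<union> F2 ` S)" for i
  proof (rule ccontr)
    assume hne: "h i \<noteq> 0"
    obtain j k l m where i: "i = (j,k,l,m)" by (cases i) auto
    have jklm: "j < n" "k < n" "l < n" "m < n" using that i by (auto simp: I4_def)
    have g: "Gf i S = T" using hne unfolding h_def by (auto split: if_splits)
    have K: "Kf n i S \<noteq> 0" using hne g h_def by simp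
    then have cfne: "cf n i S \<noteq> 0" and ffne: "phase_sum n j k * phase_sum n l m \<noteq> 0"
      by (auto simp: Kf_def i)
    then have c1: "j \<in> S" "k \<notin> S - {j}" "l \<in> insert k (S - {j})" "m \<notin> insert k (S - {j}) - {l}"
      by (auto simp: cf_def i ca_def cb_def split: if_splits)
    have g': "insert m (insert k (S - {j}) - {l}) = T" using g by (simp add: Gf_def i)
    from cases_lemma[OF ab(1-3) c1[unfolded S_def] g'[unfolded S_def T_def]]
    consider "j = a \<and> k = b \<and> l \<in> insert b R \<and> m = l" | "j \<in> insert a R \<and> k = j \<and> l = a \<and> m = b"
      | "j = a \<and> l = k \<and> m = b \<and> k \<notin> insert a (insert b R)" | "j \<in> R \<and> k = b \<and> l = a \<and> m = j"
      by blast
    then show False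
    proof cases
      case 1 then show ?thesis using that i by (auto simp: F1_def T_def)
    next
      case 2 then show ?thesis using that i by (auto simp: F2_def S_def)
    next
      case 3 then show ?thesis using ffne zero jklm by auto
    next
      case 4
      then have "j \<notin> {a,b}" using ab by auto
      then show ?thesis using ffne zero jklm 4 by (auto simp: mult.commute)
    qed
  qed
  have "(\<Sum>i\<in>I4 n. h i) = (\<Sum>i\<in>F1 ` T \<union> F2 ` S. h i)"
    by (rule sum.mono_neutral_right[OF fin sub]) (use z in blast)
  also have "\<dots> = (\<Sum>i\<in>F1 ` T. h i) + (\<Sum>i\<in>F2 ` S. h i)"
    by (rule sum.union_disjoint) (use ab in \<open>auto simp: F1_def F2_def S_def T_def\<close>)
  also have "(\<Sum>i\<in>F1 ` T. h i) = (\<Sum>l\<in>T. h (F1 l))"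
    by (rule sum.reindex_cong[where l=F1]) (auto simp: inj_on_def F1_def)
  also have "\<dots> = (\<Sum>l\<in>T. c)"
  proof (rule sum.cong)
    fix l assume lT: "l \<in> T"
    have SR: "S - {a} = R" using ab by (auto simp: S_def)
    have g: "Gf (F1 l) S = T" using lT by (auto simp: Gf_def F1_def SR T_def)
    have "cf n (F1 l) S = 1"
      using lT ab lt
      by (auto simp: cf_def F1_def SR ca_def cb_def T_def sg_remove_same sg_sq insert_absorb s1 s2 mult.assoc S_def)
    then show "h (F1 l) = c" using g by (simp add: h_def Kf_def F1_def phase_diag c_def)
  qed simp
  also have "(\<Sum>i\<in>F2 ` S. h i) = (\<Sum>j\<in>S. h (F2 j))"
    by (rule sum.reindex_cong[where l=F2]) (auto simp: inj_on_def F2_def)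
  also have "\<dots> = (\<Sum>j\<in>S. c)"
  proof (rule sum.cong)
    fix j assume jS: "j \<in> S"
    have SR: "S - {a} = R" using ab by (auto simp: S_def)
    have ins: "insert j (S - {j}) = S" using jS by auto
    have g: "Gf (F2 j) S = T" unfolding Gf_def F2_def T_def by (simp only: ins SR prod.case)
    have Ssub: "S \<subseteq> {..<n}" using ab by (auto simp: S_def)
    have aS: "a \<in> S" "b \<notin> S" using ab by (auto simp: S_def)
    have "cf n (F2 j) S = ca j S * cb n j (S - {j}) * ca a S * cb n b R"
      unfolding cf_def F2_def by (simp only: ins SR prod.case)
    also have "\<dots> = sg S j * sg S j * sg S a * sg R b"
      using jS Ssub aS ab by (auto simp: ca_def cb_def ins sg_remove_same)
    also have "\<dots> = 1" using s1 s2 by (simp add: sg_sq S_def)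
    finally have "cf n (F2 j) S = 1" .
    then show "h (F2 j) = c" using g by (simp add: h_def Kf_def F2_def phase_diag c_def)
  qed simp
  finally have "(\<Sum>i\<in>I4 n. h i) = of_nat (card T) * c + of_nat (card S) * c" by simp
  also have "\<dots> = of_nat (card R + 1) * phase_sum n a b / of_nat n"
  proof -
    have cT: "card T = card R + 1" "card S = card R + 1" using ab by (auto simp: S_def T_def)
    have "of_nat (n div 2) * 2 = (of_nat n :: complex)" using ev
      by (metis even_two_times_div_two mult.commute of_nat_mult of_nat_numeral)
    then have h: "(of_nat (n div 2) :: complex) = of_nat n / 2" by (simp add: field_simps)
    have "n > 0" using ab by auto
    then show ?thesis unfolding cT c_def h by (simp add: field_simps power2_eq_square)
  qed
  finally show ?thesis unfolding h_def S_def T_def .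
qed



definition zz :: "nat \<Rightarrow> int \<Rightarrow> complex" where
  "zz n d = exp (2 * complex_of_real pi * \<i> * of_int d / of_nat n)"

lemma phase_gp: "phase_sum n a b = (\<Sum>x<n div 2. zz n (int b - int a) ^ x)"
proof -
  have "exp (2 * complex_of_real pi * \<i> * of_nat x * of_int (int b - int a) / of_nat n)
      = zz n (int b - int a) ^ x" for x
  proof -
    have "2 * complex_of_real pi * \<i> * of_nat x * of_int (int b - int a) / of_nat n
       = of_nat x * (2 * complex_of_real pi * \<i> * of_int (int b - int a) / of_nat n)"
      by (simp add: field_simps)
    then show ?thesis unfolding zz_def exp_of_nat_mult[symmetric] by (rule arg_cong)
  qed
  then show ?thesis by (simp add: phase_sum_def)
qed

lemma zz_pow_half:
  assumes "even n" "n > 0"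
  shows "zz n d ^ (n div 2) = exp (complex_of_real pi * \<i> * of_int d)"
proof -
  have "zz n d ^ (n div 2) = exp (of_nat (n div 2) * (2 * complex_of_real pi * \<i> * of_int d / of_nat n))"
    unfolding zz_def exp_of_nat_mult[symmetric] by simp
  also have "of_nat (n div 2) * (2 * complex_of_real pi * \<i> * of_int d / of_nat n) = complex_of_real pi * \<i> * of_int d"
  proof -
    have "(of_nat (n div 2) :: complex) * 2 = of_nat n" using assms
      by (metis even_two_times_div_two mult.commute of_nat_mult of_nat_numeral)
    then show ?thesis using assms by (simp add: field_simps)
  qed
  finally show ?thesis .
qed

lemma zz_ne1:
  assumes "n > 0" "d \<noteq> 0" "\<bar>d\<bar> < int n"
  shows "zz n d \<noteq> 1"
proof
  assume "zz n d = 1"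
  then obtain m :: int where "Im (2 * complex_of_real pi * \<i> * of_int d / of_nat n) = of_int (2 * m) * pi"
    unfolding zz_def exp_eq_1 by blast
  then have "2 * pi * of_int d / real n = of_int (2 * m) * pi" by simp
  then have "real_of_int d = of_int m * real n" using assms pi_gt_zero
    by (simp add: field_simps)
  then have dm: "d = m * int n" by (metis of_int_eq_iff of_int_mult of_int_of_nat_eq)
  then have "m \<noteq> 0" using assms by auto
  then have "\<bar>d\<bar> \<ge> int n" unfolding dm abs_mult using assms
    by (simp add: mult_le_cancel_right1 abs_if) 
  then show False using assms by simp
qed

lemma phase_zero:
  assumes "even n" "n > 0" "even (int b - int a)" "int b - int a \<noteq> 0" "\<bar>int b - int a\<bar> < int n"
  shows "phase_sum n a b = 0"
proof -
  let ?d = "int b - int a"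
  obtain e where e: "?d = 2 * e" using assms(3) by blast
  have "exp (complex_of_real pi * \<i> * of_int ?d) = 1"
    unfolding exp_eq_1 using e by auto
  then show ?thesis using zz_ne1[OF assms(2,4,5)] zz_pow_half[OF assms(1,2)]
    by (simp add: phase_gp sum_gp_strict)
qed

lemma zero_prod01:
  assumes "even n" "k < n" "k \<notin> {0, 1}"
  shows "phase_sum n 0 k * phase_sum n k 1 = 0" "phase_sum n 1 k * phase_sum n k 0 = 0"
proof -
  have n: "n > 0" using assms by auto
  have k2: "k \<ge> 2" using assms by auto
  show "phase_sum n 0 k * phase_sum n k 1 = 0"
  proof (cases "even k")
    case True
    have "phase_sum n 0 k = 0" by (rule phase_zero) (use True assms n k2 in auto)
    then show ?thesis by simp
  next
    case False
    have "phase_sum n k 1 = 0" by (rule phase_zero) (use False assms n k2 in auto)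
    then show ?thesis by simp
  qed
  show "phase_sum n 1 k * phase_sum n k 0 = 0"
  proof (cases "even k")
    case True
    have "phase_sum n k 0 = 0" by (rule phase_zero) (use True assms n k2 in auto)
    then show ?thesis by simp
  next
    case False
    have "phase_sum n 1 k = 0" by (rule phase_zero) (use False assms n k2 in auto)
    then show ?thesis by simp
  qed
qed

lemma phase_cnj: "phase_sum n b a = cnj (phase_sum n a b)"
  unfolding phase_sum_def cnj_sum exp_cnj
  by (rule sum.cong) (simp_all add: field_simps)



lemma cos_lb: fixes x :: real assumes "0 \<le> x" shows "1 - x^2/2 \<le> cos x"
proof -
  let ?f = "\<lambda>u::real. cos u - 1 + u^2/2"
  have "?f 0 \<le> ?f x"
  proof (rule DERIV_nonneg_imp_nondecreasing[OF assms])
    fix u :: real assume "0 \<le> u" "u \<le> x"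
    have "DERIV ?f u :> (- sin u + u)"
      by (auto intro!: derivative_eq_intros simp: field_simps)
    moreover have "- sin u + u \<ge> 0" using sin_x_le_x[OF \<open>0 \<le> u\<close>] by simp
    ultimately show "\<exists>y. DERIV ?f u :> y \<and> y \<ge> 0" by blast
  qed
  then show ?thesis by simp
qed

lemma sin_lb: fixes x :: real assumes "0 \<le> x" shows "x - x^3/6 \<le> sin x"
proof -
  let ?f = "\<lambda>u::real. sin u - u + u^3/6"
  have "?f 0 \<le> ?f x"
  proof (rule DERIV_nonneg_imp_nondecreasing[OF assms])
    fix u :: real assume "0 \<le> u" "u \<le> x"
    have "DERIV ?f u :> (cos u - 1 + u^2/2)"
      by (auto intro!: derivative_eq_intros simp: field_simps power2_eq_square)
    moreover have "cos u - 1 + u^2/2 \<ge> 0" using cos_lb[OF \<open>0 \<le> u\<close>] by simp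
    ultimately show "\<exists>y. DERIV ?f u :> y \<and> y \<ge> 0" by blast
  qed
  then show ?thesis by simp
qed

lemma cot_bound:
  fixes x :: real assumes x: "0 < x" "x \<le> pi/2"
  shows "\<bar>cos x / sin x - 1/x\<bar> \<le> 3/2 * x"
proof -
  have x4: "x < 2" using x pi_less_4 by linarith
  have s1: "sin x \<le> x" using sin_x_le_x x by simp
  have s2: "x - x^3/6 \<le> sin x" using sin_lb x by simp
  have c1: "1 - x^2/2 \<le> cos x" using cos_lb x by simp
  have c2: "cos x \<le> 1" by simp
  have "x^3/6 \<le> x * (2/3)"
  proof -
    have "x * x \<le> 2 * 2" using x4 x by (intro mult_mono) auto
    then have "x * (x * x) \<le> x * 4" using x by (intro mult_left_mono) auto
    then show ?thesis by (simp add: power3_eq_cube)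
  qed
  then have sx: "sin x \<ge> x / 3" using s2 by simp
  have spos: "sin x > 0" using sx x by simp
  have up: "x * cos x - sin x \<le> x^3/2"
  proof -
    have "x * cos x \<le> x" using c2 x by simp
    moreover have "0 \<le> x^3" using x by simp
    ultimately show ?thesis using s2 by linarith
  qed
  have lo: "sin x - x * cos x \<le> x^3/2"
  proof -
    have "x * (1 - x^2/2) \<le> x * cos x" using c1 x by (simp add: mult_left_mono)
    then show ?thesis using s1 by (simp add: algebra_simps power3_eq_cube power2_eq_square)
  qed
  have ab: "\<bar>x * cos x - sin x\<bar> \<le> x^3/2" unfolding abs_le_iff using up lo by linarith
  have "x^3/2 \<le> 3/2 * x * (x * sin x)"
  proof -
    have "x * x * (x/3) \<le> x * x * sin x" using sx x by (simp add: mult_left_mono)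
    then show ?thesis by (simp add: power3_eq_cube field_simps)
  qed
  then have ab2: "\<bar>x * cos x - sin x\<bar> \<le> 3/2 * x * (x * sin x)" using ab by simp
  have "cos x / sin x - 1/x = (x * cos x - sin x) / (x * sin x)" using x spos by (simp add: field_simps)
  then have "\<bar>cos x / sin x - 1/x\<bar> = \<bar>x * cos x - sin x\<bar> / (x * sin x)" using x spos by simp
  also have "\<dots> \<le> 3/2 * x" using ab2 x spos by (simp add: pos_divide_le_eq)
  finally show ?thesis .
qed

lemma main_bound:
  fixes n eta :: nat assumes "n \<ge> 2" "2 * eta \<le> n"
  shows "\<bar>real eta * (cos (pi / n) / sin (pi / n)) / real n - real eta / pi\<bar> \<le> 2"
proof -
  define x where "x = pi / n"
  have x: "0 < x" "x \<le> pi / 2" using assms by (auto simp: x_def field_simps)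
  have e: "real eta / pi = real eta / real n * (1 / x)" using assms by (simp add: x_def)
  have "real eta * (cos x / sin x) / real n - real eta / pi = real eta / real n * (cos x / sin x - 1/x)"
    unfolding e by (simp add: algebra_simps)
  then have "\<bar>real eta * (cos x / sin x) / real n - real eta / pi\<bar> = real eta / real n * \<bar>cos x / sin x - 1/x\<bar>"
    by (simp add: abs_mult)
  also have "\<dots> \<le> 1/2 * (3/2 * x)"
  proof (rule mult_mono)
    show "real eta / real n \<le> 1/2" using assms by (simp add: field_simps)
  qed (use cot_bound[OF x] in auto)
  also have "\<dots> \<le> 2" using x pi_less_4 by simp
  finally show ?thesis by (simp add: x_def)
qed

lemma Im01:
  assumes "even n" "n \<ge> 2"
  shows "Im (phase_sum n 0 1) = cos (pi / n) / sin (pi / n)"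
proof -
  have n: "n > 0" using assms by simp
  have ne: "zz n 1 \<noteq> 1" by (rule zz_ne1) (use assms in auto)
  have h: "zz n 1 ^ (n div 2) = -1" using zz_pow_half[OF assms(1) n, of 1] by simp
  have ps: "phase_sum n 0 1 = 2 / (1 - zz n 1)"
    using ne h by (simp add: phase_gp sum_gp_strict)
  define t where "t = 2 * pi / n"
  have zt: "zz n 1 = exp (\<i> * complex_of_real t)" unfolding zz_def t_def
    by (rule arg_cong[where f=exp]) (simp add: field_simps)
  have Re: "Re (zz n 1) = cos t" and Imz: "Im (zz n 1) = sin t"
    unfolding zt by (simp_all add: Re_exp Im_exp)
  define y where "y = pi / n"
  have t2: "t = 2 * y" by (simp add: t_def y_def)
  have spos: "sin y > 0" using assms pi_gt_zero by (intro sin_gt_zero) (auto simp: y_def field_simps)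
  have "Im (2 / (1 - zz n 1)) = 2 * sin t / ((1 - cos t)^2 + (sin t)^2)"
    by (simp add: Im_divide Re Imz)
  also have "(1 - cos t)^2 + (sin t)^2 = 2 * (1 - cos t)"
    by (simp add: power2_eq_square algebra_simps sin_squared_eq)
  also have "1 - cos t = 2 * sin y ^ 2" unfolding t2 cos_double_sin by simp
  also have "sin t = 2 * sin y * cos y" unfolding t2 sin_double by simp
  also have "2 * (2 * sin y * cos y) / (2 * (2 * sin y ^ 2)) = cos y / sin y"
    using spos by (simp add: field_simps power2_eq_square)
  finally show ?thesis unfolding ps y_def .
qed



lemma finner_two:
  assumes "A \<in> Pow {..<n}" "B \<in> Pow {..<n}" "A \<noteq> B"
    and phi: "\<And>X. \<phi> X = (if X = A then \<alpha> else 0) + (if X = B then \<beta> else 0)"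
  shows "finner n \<phi> \<psi> = cnj \<alpha> * \<psi> A + cnj \<beta> * \<psi> B"
proof -
  have "finner n \<phi> \<psi> = (\<Sum>S\<in>Pow {..<n}. (if S = A then cnj \<alpha> * \<psi> S else 0) + (if S = B then cnj \<beta> * \<psi> S else 0))"
    unfolding finner_def by (rule sum.cong) (auto simp: phi distrib_right)
  also have "\<dots> = cnj \<alpha> * \<psi> A + cnj \<beta> * \<psi> B"
    using assms(1,2) by (simp add: sum.distrib sum.delta)
  finally show ?thesis .
qed

lemma Cp_at:
  assumes "p \<ge> 1" "S \<noteq> T"
    and phi: "\<And>X. \<phi> X = (if X = T then \<alpha> else 0) + (if X = S then \<beta> else 0)"
  shows "Cp n p \<phi> S = \<alpha> * (tt n S - tt n T)^p * (\<Sum>i\<in>I4 n. if Gf i S = T then Kf n i S else 0)"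
proof -
  have "Cp n p \<phi> S = (\<Sum>i\<in>I4 n. \<alpha> * (tt n S - tt n T)^p * (if Gf i S = T then Kf n i S else 0))"
    unfolding Cp_eq
  proof (rule sum.cong)
    fix i
    show "Kf n i S * (tt n S - tt n (Gf i S)) ^ p * \<phi> (Gf i S) =
          \<alpha> * (tt n S - tt n T) ^ p * (if Gf i S = T then Kf n i S else 0)"
      using assms by (cases "Gf i S = T"; cases "Gf i S = S") (auto simp: phi)
  qed simp
  then show ?thesis by (simp add: sum_distrib_left)
qed

lemma expect_formula:
  assumes n: "even n" and eta: "1 \<le> eta" "eta \<le> n div 2" and p: "p \<ge> 1"
  shows "(if odd p then cmod (finner n (psi_til n eta) (Cp n p (psi_til n eta)))
                 else cmod (finner n (phi_til n eta) (Cp n p (phi_til n eta))))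
     = real n ^ p * real eta * (cos (pi / n) / sin (pi / n)) / real n"
proof -
  define R where "R = {n + 1 - eta..<n}"
  define A where "A = insert 1 R"
  define B where "B = insert 0 R"
  have n2: "n \<ge> 2" using eta n by auto
  have A: "cfgA n eta = A" by (auto simp: cfgA_def A_def R_def)
  have B: "cfgB n eta = B" by (auto simp: cfgB_def B_def R_def)
  have R01: "0 \<notin> R" "1 \<notin> R" using eta n2 by (auto simp: R_def)
  have Rlt: "\<forall>r\<in>R. 0 < r \<and> 1 < r" using eta n2 by (auto simp: R_def)
  have Rsub: "R \<subseteq> {..<n}" "finite R" by (auto simp: R_def)
  have cardR: "card R + 1 = eta" using eta n2 by (simp add: R_def)
  have AB: "A \<noteq> B" "A \<in> Pow {..<n}" "B \<in> Pow {..<n}" using R01 Rsub n2 by (auto simp: A_def B_def)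
  define z where "z = phase_sum n 0 1"
  have MBA: "(\<Sum>i\<in>I4 n. if Gf i B = A then Kf n i B else 0) = of_nat eta * z / of_nat n"
    unfolding A_def B_def z_def cardR[symmetric]
    by (rule M_eq) (use R01 Rlt Rsub n2 n zero_prod01 in auto)
  have MAB: "(\<Sum>i\<in>I4 n. if Gf i A = B then Kf n i A else 0) = of_nat eta * cnj z / of_nat n"
    unfolding A_def B_def z_def cardR[symmetric] phase_cnj[symmetric]
    by (rule M_eq) (use R01 Rlt Rsub n2 n zero_prod01 in auto)
  have ttA: "tt n A = 0" using R01 by (simp add: tt_def A_def)
  have ttB: "tt n B = of_nat n" using AB by (simp add: tt_def B_def)
  have Imz: "Im z = cos (pi / n) / sin (pi / n)" unfolding z_def by (rule Im01) (use n n2 in auto)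
  have Imz0: "Im z \<ge> 0"
  proof -
    have "0 \<le> cos (pi / n)" using n2 pi_gt_zero by (intro cos_ge_zero) (auto simp: field_simps intro: order.trans[of _ 0])
    moreover have "0 < sin (pi / n)" using n2 by (intro sin_gt_zero) (auto simp: field_simps)
    ultimately show ?thesis by (simp add: Imz)
  qed
  define r :: complex where "r = 1 / sqrt 2"
  have s2: "complex_of_real (sqrt 2) * complex_of_real (sqrt 2) = 2"
    by (simp flip: of_real_mult)
  have rr: "cnj r = r" "r * r = 1/2" using s2 by (simp_all add: r_def)
  show ?thesis
  proof (cases "odd p")
    case True
    have phi: "psi_til n eta X = (if X = A then r else 0) + (if X = B then r else 0)" for X
      using AB by (auto simp: psi_til_def fbasis_def A B r_def)
    have phi': "psi_til n eta X = (if X = B then r else 0) + (if X = A then r else 0)" for X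
      using phi by simp
    have cA: "Cp n p (psi_til n eta) A = r * (- of_nat n)^p * (of_nat eta * cnj z / of_nat n)"
      using Cp_at[OF p AB(1) phi', of n] MAB ttA ttB by simp
    have cB: "Cp n p (psi_til n eta) B = r * (of_nat n)^p * (of_nat eta * z / of_nat n)"
      using Cp_at[OF p AB(1)[symmetric] phi, of n] MBA ttA ttB by simp
    have "finner n (psi_til n eta) (Cp n p (psi_til n eta))
       = (r * r) * of_nat n ^ p * (of_nat eta / of_nat n) * (z - cnj z)"
      using True by (simp add: finner_two[OF AB(2,3,1) phi] cA cB rr(1) algebra_simps diff_divide_distrib power_minus_odd)
    also have "\<dots> = complex_of_real (real n ^ p * real eta / real n * Im z) * \<i>"
      by (simp add: rr complex_diff_cnj)
    finally have F: "finner n (psi_til n eta) (Cp n p (psi_til n eta)) = complex_of_real (real n ^ p * real eta / real n * Im z) * \<i>" .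
    have "0 \<le> real n ^ p * real eta / real n * Im z" using Imz0 by simp
    then have "cmod (finner n (psi_til n eta) (Cp n p (psi_til n eta))) = real n ^ p * real eta / real n * Im z"
    proof -
      have "cmod \<i> = 1" by simp
      then show ?thesis using \<open>0 \<le> real n ^ p * real eta / real n * Im z\<close>
        by (simp only: F norm_mult norm_of_real abs_of_nonneg mult_1_right)
    qed
    then show ?thesis using True by (simp add: Imz)
  next
    case False
    have phi: "phi_til n eta X = (if X = A then r else 0) + (if X = B then r * \<i> else 0)" for X
      using AB by (auto simp: phi_til_def fbasis_def A B r_def)
    have phi': "phi_til n eta X = (if X = B then r * \<i> else 0) + (if X = A then r else 0)" for X
      using phi by simp
    have cA: "Cp n p (phi_til n eta) A = r * \<i> * (- of_nat n)^p * (of_nat eta * cnj z / of_nat n)"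
      using Cp_at[OF p AB(1) phi', of n] MAB ttA ttB by simp
    have cB: "Cp n p (phi_til n eta) B = r * (of_nat n)^p * (of_nat eta * z / of_nat n)"
      using Cp_at[OF p AB(1)[symmetric] phi, of n] MBA ttA ttB by simp
    have "finner n (phi_til n eta) (Cp n p (phi_til n eta))
       = (r * r) * \<i> * of_nat n ^ p * (of_nat eta / of_nat n) * (- (z - cnj z))"
      using False by (simp add: finner_two[OF AB(2,3,1) phi] cA cB rr(1) algebra_simps diff_divide_distrib power_minus_even)
    also have "\<dots> = complex_of_real (real n ^ p * real eta / real n * Im z)"
      using rr(2) by (simp add: complex_diff_cnj) (simp add: field_simps)
    finally have F: "finner n (phi_til n eta) (Cp n p (phi_til n eta)) = complex_of_real (real n ^ p * real eta / real n * Im z)" .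
    have "0 \<le> real n ^ p * real eta / real n * Im z" using Imz0 by simp
    then have "cmod (finner n (phi_til n eta) (Cp n p (phi_til n eta))) = real n ^ p * real eta / real n * Im z"
      by (simp only: F norm_of_real abs_of_nonneg)
    then show ?thesis using False by (simp add: Imz)
  qed
qed


theorem proposition13:
  fixes p :: nat
  assumes "p \<ge> 1"
  shows "\<exists>C::real. \<forall>n \<eta> :: nat. even n \<and> 1 \<le> \<eta> \<and> \<eta> \<le> n div 2 \<longrightarrow>
     \<bar>(if odd p then cmod (finner n (psi_til n \<eta>) (Cp n p (psi_til n \<eta>)))
                 else cmod (finner n (phi_til n \<eta>) (Cp n p (phi_til n \<eta>))))
        - real n ^ p * real \<eta> / pi\<bar> \<le> C * real n ^ p"
proof (intro exI allI impI)
  fix n \<eta> :: nat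
  assume h: "even n \<and> 1 \<le> \<eta> \<and> \<eta> \<le> n div 2"
  have n2: "n \<ge> 2" "2 * \<eta> \<le> n" using h by auto
  have "(if odd p then cmod (finner n (psi_til n \<eta>) (Cp n p (psi_til n \<eta>)))
                 else cmod (finner n (phi_til n \<eta>) (Cp n p (phi_til n \<eta>))))
        - real n ^ p * real \<eta> / pi
      = real n ^ p * (real \<eta> * (cos (pi / n) / sin (pi / n)) / real n - real \<eta> / pi)"
    using expect_formula[of n \<eta> p] h assms by (simp add: algebra_simps)
  then have "\<bar>(if odd p then cmod (finner n (psi_til n \<eta>) (Cp n p (psi_til n \<eta>)))
                 else cmod (finner n (phi_til n \<eta>) (Cp n p (phi_til n \<eta>))))
        - real n ^ p * real \<eta> / pi\<bar>
      = real n ^ p * \<bar>real \<eta> * (cos (pi / n) / sin (pi / n)) / real n - real \<eta> / pi\<bar>"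
    by (simp add: abs_mult)
  also have "\<dots> \<le> real n ^ p * 2"
    by (rule mult_left_mono[OF main_bound[OF n2]]) simp
  finally show "\<bar>(if odd p then cmod (finner n (psi_til n \<eta>) (Cp n p (psi_til n \<eta>)))
                 else cmod (finner n (phi_til n \<eta>) (Cp n p (phi_til n \<eta>))))
        - real n ^ p * real \<eta> / pi\<bar> \<le> 2 * real n ^ p" by simp
qed

end
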